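(* Let $f_1:\mathbb{R}^m\to(-\infty,+\infty]$ be proper convex lower semi-continuous, $B\in\mathbb{R}^{m\times d}$, and $f_2(x)=\frac1n\sum_{i=1}^n\phi_i(x)$ with each $\phi_i:\mathbb{R}^d\to\mathbb{R}$ smooth and convex. Let $(x_k,v_k)_{k\ge1}$ be generated by Algorithm 1 (described in the context) with parameters $c>0$, $\alpha\in(0,1]$ and $0<\lambda\le 1/\rho_{\max}(BB^T)$. Let $x^*$ be a minimizer of $f_1(Bx)+f_2(x)$ over $\mathbb{R}^d$ and let $v^*\in\mathbb{R}^m$ be such that, for every $k$, with $h_k(x)=\frac{\lambda}{\gamma_k}f_1(\frac{\gamma_k}{\lambda}x)$, $$v^*=(I-\mathrm{Prox}_{h_k})\Big(\tfrac{\lambda}{\gamma_k}B\big(x^*-\gamma_k\nabla f_2(x^* )\big)+(I-\lambda BB^T)v^*\Big),\qquad x^*=x^*-\gamma_k\nabla f_2(x^* )-\gamma_kB^Tv^*.$$ Then for every $k\ge1$, $$\begin{aligned}\mathbb{E}^{(k+1)}\Big(\|x_{k+1}-x^*\|_2^2+\tfrac{\gamma_{k+1}^2}{\lambda}\|v_{k+1}-v^*\|_2^2\Big)\le\ &\mathbb{E}^{(k)}\big(\|x_k-x^*\|_2^2\big)+\tfrac{\gamma_k^2}{\lambda}\big(1-\lambda\rho_{\min}(BB^T)\big)\mathbb{E}^{(k)}\big(\|v_k-v^*\|_2^2\big)\\ &-2\gamma_k\,\mathbb{E}^{(k)}\langle\nabla f_2(x_k)-\nabla f_2(x^* ),x_k-x^*\rangle\\&+\gamma_k^2\,\mathbb{E}^{(k+1)}\big(\|\nabla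 f_2^{[i_k]}(x_k)-\nabla f_2(x^* )\|_2^2\big).\end{aligned}$$
   Context: $\mathrm{Prox}_f(y)=\arg\min_x\{f(x)+\frac12\|x-y\|_2^2\}$. $\rho_{\max}(BB^T)$ and $\rho_{\min}(BB^T)$ are the largest and smallest eigenvalues of $BB^T$. Stochastic gradient: fix a batch size $p$ dividing $n$; for $i\in\{1,\dots,n/p\}$ let $\nabla f_2^{[i]}(x)=\frac1p\sum_{j=(i-1)p+1}^{ip}\nabla\phi_j(x)$. Algorithm 1: choose $x_1\in\mathbb{R}^d$, $v_1\in\mathbb{R}^m$; for $k=1,2,\dots$: set $\gamma_k=c/k^\alpha$; draw $i_k$ from $\{1,\dots,n/p\}$, each value with probability $p/n$, independently of the past; set $x_{k+1/2}=x_k-\gamma_k\nabla f_2^{[i_k]}(x_k)$, $v_{k+1}=\frac{\lambda}{\gamma_k}\big(I-\mathrm{Prox}_{\frac{\gamma_k}{\lambda}f_1}\big)\big(Bx_{k+1/2}+(I-\lambda BB^T)\frac{\gamma_k}{\lambda}v_k\big)$, $x_{k+1}=x_{k+1/2}-\gamma_kB^Tv_{k+1}$. $\mathbb{E}^{(k)}(\cdot)$ denotes expectation with respect to all random indices drawn up to the $k$-th iterate (i.e. $i_1,\dots,i_{k-1}$, which determine $x_k,v_k$); thus $\mathbb{E}^{(k+1)}$ also averages over $i_k$. *)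

theory Defs
  imports "HOL-Analysis.Analysis"
begin

definition proper_fun :: "('a \<Rightarrow> ereal) \<Rightarrow> bool" where
  "proper_fun f \<longleftrightarrow> (\<forall>x. f x \<noteq> -\<infinity>) \<and> (\<exists>x. f x \<noteq> \<infinity>)"

definition convex_ereal_fun :: "('a::real_vector \<Rightarrow> ereal) \<Rightarrow> bool" where
  "convex_ereal_fun f \<longleftrightarrow>
     (\<forall>x y t. 0 < t \<and> t < 1 \<longrightarrow>
        f ((1 - t) *\<^sub>R x + t *\<^sub>R y) \<le> ereal (1 - t) * f x + ereal t * f y)"

definition lsc_fun :: "('a::topological_space \<Rightarrow> ereal) \<Rightarrow> bool" where
  "lsc_fun f \<longleftrightarrow> (\<forall>x. f x \<le> Liminf (at x) f)"

definition prox :: "('a::real_normed_vector \<Rightarrow> ereal) \<Rightarrow> 'a \<Rightarrow> 'a" where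
  "prox f y = (SOME x. \<forall>z. f x + ereal ((norm (x - y))\<^sup>2 / 2) \<le> f z + ereal ((norm (z - y))\<^sup>2 / 2))"

definition eigenvalues :: "real^'m^'m \<Rightarrow> real set" where
  "eigenvalues A = {\<mu>. \<exists>w. w \<noteq> 0 \<and> A *v w = \<mu> *\<^sub>R w}"

definition rho_max :: "real^'m^'m \<Rightarrow> real" where
  "rho_max A = Max (eigenvalues A)"

definition rho_min :: "real^'m^'m \<Rightarrow> real" where
  "rho_min A = Min (eigenvalues A)"

text \<open>Expectation E^{(k)}: uniform average over all index sequences i_1,...,i_{k-1},
  each index taking values in {0..<N} with probability 1/N, independently.\<close>
definition expect_k :: "nat \<Rightarrow> nat \<Rightarrow> ((nat \<Rightarrow> nat) \<Rightarrow> real) \<Rightarrow> real" where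
  "expect_k N k g =
     (\<Sum>s\<in>PiE {1..<k} (\<lambda>_. {..<N}). g s) / real (card (PiE {1..<k} (\<lambda>_. {..<N})))"

end

theory Submission
  imports Defs
begin

lemma lsc_open:
  fixes f :: "'a::topological_space \<Rightarrow> ereal"
  assumes "lsc_fun f" shows "open {x. c < f x}"
proof (subst open_subopen, intro ballI)
  fix x assume "x \<in> {x. c < f x}"
  then have "c < Liminf (at x) f" using assms unfolding lsc_fun_def
    using order_less_le_trans by blast
  then have "eventually (\<lambda>y. c < f y) (at x)" by (rule less_LiminfD)
  then obtain S where S: "open S" "x \<in> S" "\<forall>y\<in>S. y \<noteq> x \<longrightarrow> c < f y"
    unfolding eventually_at_topological by blast
  show "\<exists>T. open T \<and> x \<in> T \<and> T \<subseteq> {x. c < f x}"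
    using S \<open>x \<in> {x. c < f x}\<close> by (intro exI[of _ S]) auto
qed

lemma lsc_plus_open:
  fixes f :: "'a::metric_space \<Rightarrow> ereal"
  assumes "lsc_fun f" "continuous_on UNIV h"
  shows "open {x. ereal r < f x + ereal (h x)}"
proof (subst open_subopen, intro ballI)
  fix x assume "x \<in> {x. ereal r < f x + ereal (h x)}"
  then have hx: "ereal r < f x + ereal (h x)" by simp
  obtain e where e: "e > 0" "ereal (r - h x + e) < f x"
  proof (cases "f x")
    case (real y)
    have "r < y + h x" using hx real by simp
    then show ?thesis using real
      by (intro that[of "(y - (r - h x))/2"]) (auto simp: field_simps)
  next
    case PInf then show ?thesis by (intro that[of 1]) auto
  next
    case MInf then show ?thesis using hx by auto
  qed
  define T where "T = {y. ereal (r - h x + e) < f y} \<inter> (h -` ball (h x) e)"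
  have "open T" unfolding T_def
    by (intro open_Int lsc_open assms(1) open_vimage assms(2) open_ball)
  moreover have "x \<in> T" using e unfolding T_def by auto
  moreover have "T \<subseteq> {x. ereal r < f x + ereal (h x)}"
  proof
    fix y assume "y \<in> T"
    then have y1: "ereal (r - h x + e) < f y" and y2: "dist (h x) (h y) < e"
      unfolding T_def by auto
    have "r < (r - h x + e) + h y" using y2 by (auto simp: dist_real_def)
    then show "y \<in> {x. ereal r < f x + ereal (h x)}"
      using y1 by (cases "f y") auto
  qed
  ultimately show "\<exists>T. open T \<and> x \<in> T \<and> T \<subseteq> {x. ereal r < f x + ereal (h x)}" by blast
qed

lemma attain_min:
  fixes g :: "'a::topological_space \<Rightarrow> ereal"
  assumes K: "compact K" "K \<noteq> {}"
    and ninf: "\<And>x. g x \<noteq> -\<infinity>"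
    and op: "\<And>r. open {x. ereal r < g x}"
  shows "\<exists>p\<in>K. \<forall>z\<in>K. g p \<le> g z"
proof (rule ccontr)
  assume "\<not> ?thesis"
  then have nm: "\<forall>p\<in>K. \<exists>z\<in>K. g z < g p" by (auto simp: not_le)
  have opz: "open {x. g z < g x}" for z
  proof (cases "g z")
    case (real r) then show ?thesis using op[of r] by simp
  next
    case PInf then show ?thesis by simp
  next
    case MInf then show ?thesis using ninf by simp
  qed
  have cov: "K \<subseteq> (\<Union>z\<in>K. {x. g z < g x})" using nm by blast
  obtain F where F: "F \<subseteq> K" "finite F" "K \<subseteq> (\<Union>z\<in>F. {x. g z < g x})"
    using compactE_image[OF K(1) opz cov] by blast
  have "F \<noteq> {}" using F(3) K(2) by blast
  have "Min (g ` F) \<in> g ` F" using F(2) \<open>F \<noteq> {}\<close> by (intro Min_in) auto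
  then obtain z0 where z0a: "z0 \<in> F" "g z0 = Min (g ` F)" by auto
  then have z0: "z0 \<in> F" "\<forall>z\<in>F. g z0 \<le> g z" using F(2) by auto
  then obtain z where "z \<in> F" "g z < g z0" using F by blast
  then show False using z0 by (meson leD)
qed

definition ismin :: "('a::real_normed_vector \<Rightarrow> ereal) \<Rightarrow> real \<Rightarrow> 'a \<Rightarrow> 'a \<Rightarrow> bool" where
  "ismin f c a p \<longleftrightarrow> (\<forall>z. f p + ereal (c * (norm (p - a))\<^sup>2) \<le> f z + ereal (c * (norm (z - a))\<^sup>2))"

lemma lower_bound:
  fixes f :: "'a::euclidean_space \<Rightarrow> ereal"
  assumes pr: "proper_fun f" and cv: "convex_ereal_fun f" and ls: "lsc_fun f"
  shows "\<exists>x0 C. f x0 \<noteq> \<infinity> \<and> C \<ge> 0 \<and> (\<forall>x. ereal (- C * (1 + norm (x - x0))) \<le> f x)"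
proof -
  obtain x0 where x0: "f x0 \<noteq> \<infinity>" using pr unfolding proper_fun_def by blast
  have ninf: "\<And>x. f x \<noteq> -\<infinity>" using pr unfolding proper_fun_def by blast
  obtain F0 where F0: "f x0 = ereal F0" using x0 ninf[of x0] by (cases "f x0") auto
  obtain q where q: "q \<in> cball x0 1" "\<forall>z\<in>cball x0 1. f q \<le> f z"
    using attain_min[of "cball x0 1" f] ninf lsc_open[OF ls] by auto
  have "f q \<le> f x0" using q by auto
  then obtain L where L: "f q = ereal L" using ninf[of q] F0 by (cases "f q") auto
  define C where "C = \<bar>L\<bar> + \<bar>F0\<bar>"
  have C0: "C \<ge> 0" unfolding C_def by simp
  have "ereal (- C * (1 + norm (x - x0))) \<le> f x" for x
  proof (cases "f x")
    case PInf then show ?thesis by simp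
  next
    case MInf then show ?thesis using ninf by simp
  next
    case (real X)
    define r where "r = norm (x - x0)"
    have r0: "r \<ge> 0" unfolding r_def by simp
    show ?thesis
    proof (cases "r \<le> 1")
      case True
      then have "x \<in> cball x0 1" unfolding r_def by (simp add: dist_norm norm_minus_commute)
      then have "L \<le> X" using q L real by force
      moreover have "- C * (1 + r) \<le> - C"
      proof -
        have "C * r \<ge> 0" using C0 r0 by simp
        then show ?thesis by (simp add: algebra_simps)
      qed
      moreover have "- C \<le> L" unfolding C_def by linarith
      ultimately show ?thesis using real r_def by simp
    next
      case False
      define t where "t = 1 / r"
      have t: "0 < t" "t < 1" using False unfolding t_def by auto
      define y where "y = (1 - t) *\<^sub>R x0 + t *\<^sub>R x"
      have "y - x0 = t *\<^sub>R (x - x0)" unfolding y_def by (simp add: algebra_simps)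
      then have "norm (y - x0) = 1" using t False unfolding t_def r_def by simp
      then have "y \<in> cball x0 1" by (simp add: dist_norm norm_minus_commute)
      then have "f q \<le> f y" using q by blast
      also have "f y \<le> ereal (1 - t) * f x0 + ereal t * f x"
        using cv t unfolding convex_ereal_fun_def y_def by blast
      finally have "L \<le> (1 - t) * F0 + t * X" using L F0 real by simp
      then have "r * L \<le> r * ((1 - t) * F0 + t * X)" using r0 by (simp add: mult_left_mono)
      also have "\<dots> = (r - 1) * F0 + X" using False unfolding t_def by (simp add: field_simps)
      finally have 1: "r * L \<le> (r - 1) * F0 + X" .
      have "- \<bar>L\<bar> \<le> L" by simp
      from mult_left_mono[OF this r0] have 2: "- (r * \<bar>L\<bar>) \<le> r * L" by simp
      have 3: "(r - 1) * F0 \<le> r * \<bar>F0\<bar>"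
      proof -
        have "r - 1 \<ge> 0" using False by simp
        from mult_left_mono[OF abs_ge_self this] have "(r - 1) * F0 \<le> (r - 1) * \<bar>F0\<bar>" .
        also have "\<dots> \<le> r * \<bar>F0\<bar>" by (intro mult_right_mono) auto
        finally show ?thesis .
      qed
      have "- C * (1 + r) \<le> - C * r" using C0 by (simp add: algebra_simps)
      also have "- C * r = - (r * \<bar>L\<bar>) - r * \<bar>F0\<bar>" unfolding C_def by (simp add: algebra_simps)
      finally have "- C * (1 + r) \<le> X" using 1 2 3 by linarith
      then show ?thesis using real r_def by simp
    qed
  qed
  then show ?thesis using x0 C0 by blast
qed

lemma exists_min:
  fixes f :: "'a::euclidean_space \<Rightarrow> ereal"
  assumes pr: "proper_fun f" and cv: "convex_ereal_fun f" and ls: "lsc_fun f" and c: "c > 0"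
  shows "\<exists>p. ismin f c a p"
proof -
  obtain x0 C where x0: "f x0 \<noteq> \<infinity>" and C0: "C \<ge> 0"
    and lb: "\<And>x. ereal (- C * (1 + norm (x - x0))) \<le> f x"
    using lower_bound[OF pr cv ls] by blast
  have ninf: "\<And>x. f x \<noteq> -\<infinity>" using pr unfolding proper_fun_def by blast
  obtain F0 where F0: "f x0 = ereal F0" using x0 ninf[of x0] by (cases "f x0") auto
  define d where "d = norm (x0 - a)"
  define G0 where "G0 = F0 + c * d\<^sup>2"
  define K where "K = (C * (2 + d) + \<bar>G0\<bar> + 1) / c + 1"
  define R where "R = d + K"
  have K1: "K \<ge> 1" unfolding K_def using c C0 by (simp add: d_def)
  have cK: "c * K = C * (2 + d) + \<bar>G0\<bar> + 1 + c" unfolding K_def using c by (simp add: field_simps)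
  define h where "h = (\<lambda>x. c * (norm (x - a))\<^sup>2)"
  have hc: "continuous_on UNIV h" unfolding h_def by (intro continuous_intros)
  have x0R: "x0 \<in> cball x0 R" unfolding R_def d_def using K1 by simp
  have "\<exists>p\<in>cball x0 R. \<forall>z\<in>cball x0 R. f p + ereal (h p) \<le> f z + ereal (h z)"
  proof (rule attain_min)
    show "compact (cball x0 R)" by simp
    show "cball x0 R \<noteq> {}" using x0R by blast
    show "f x + ereal (h x) \<noteq> -\<infinity>" for x using ninf[of x] by (cases "f x") auto
    show "open {x. ereal r < f x + ereal (h x)}" for r by (rule lsc_plus_open[OF ls hc])
  qed
  then obtain p where p: "p \<in> cball x0 R" "\<forall>z\<in>cball x0 R. f p + ereal (h p) \<le> f z + ereal (h z)"
    by blast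
  have gx0: "f x0 + ereal (h x0) = ereal G0" unfolding G0_def h_def d_def using F0 by simp
  have "f p + ereal (h p) \<le> f z + ereal (h z)" for z
  proof (cases "z \<in> cball x0 R")
    case True then show ?thesis using p by blast
  next
    case False
    define r where "r = norm (z - x0)"
    have rR: "r > R" using False unfolding r_def by (simp add: dist_norm norm_minus_commute)
    define u where "u = r - d"
    have uK: "u > K" using rR unfolding u_def R_def by simp
    have d0: "d \<ge> 0" unfolding d_def by simp
    have "u \<le> norm (z - a)"
    proof -
      have "norm (z - x0) \<le> norm (z - a) + norm (a - x0)"
        using norm_triangle_ineq[of "z - a" "a - x0"] by simp
      then show ?thesis unfolding u_def r_def d_def by (simp add: norm_minus_commute)
    qed
    moreover have u0: "0 \<le> u" using uK K1 by simp
    ultimately have "u * u \<le> (norm (z - a))\<^sup>2" unfolding power2_eq_square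
      by (intro mult_mono) auto
    then have 1: "c * (u * u) \<le> h z" unfolding h_def using c by simp
    have "K * u \<le> u * u" using uK \<open>0 \<le> u\<close> by (intro mult_right_mono) auto
    from mult_left_mono[OF this, of c] c have 2: "c * K * u \<le> c * (u * u)" by (simp add: mult.assoc)
    have 3: "c * K * u = C * (2 + d) * u + (\<bar>G0\<bar> + 1) * u + c * u" using cK by (simp add: algebra_simps)
    have u1: "1 \<le> u" using uK K1 by simp
    have 4: "(\<bar>G0\<bar> + 1) * u \<ge> \<bar>G0\<bar> + 1" using mult_left_mono[OF u1, of "\<bar>G0\<bar> + 1"] by simp
    have 5: "C * (2 + d) * u \<ge> C * u + C * (1 + d)"
    proof -
      have "C * (1 + d) * u \<ge> C * (1 + d)" using mult_left_mono[OF u1, of "C * (1 + d)"] C0 d0 by simp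
      moreover have "C * (2 + d) * u = C * u + C * (1 + d) * u" by (simp add: algebra_simps)
      ultimately show ?thesis by linarith
    qed
    have 6: "c * u \<ge> 0" using c uK K1 by simp
    have 7: "C * (1 + r) = C * u + C * (1 + d)" unfolding u_def by (simp add: algebra_simps)
    have "h z \<ge> C * (1 + r) + \<bar>G0\<bar> + 1" using 1 2 3 4 5 6 7 by linarith
    then have "G0 < - C * (1 + r) + h z" by linarith
    then have "ereal G0 < f z + ereal (h z)" using lb[of z] unfolding r_def
      by (cases "f z") auto
    moreover have "f p + ereal (h p) \<le> f x0 + ereal (h x0)" using p(2) x0R by blast
    ultimately show ?thesis unfolding gx0 by (meson less_imp_le order_trans)
  qed
  then show ?thesis unfolding ismin_def h_def by blast
qed

lemma norm_sq_lin:
  fixes x y :: "'a::real_inner"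
  shows "(norm (x + s *\<^sub>R y))\<^sup>2 = (norm x)\<^sup>2 + 2 * s * (x \<bullet> y) + s\<^sup>2 * (norm y)\<^sup>2"
  unfolding power2_norm_eq_inner
  by (simp add: inner_add_left inner_add_right inner_commute power2_eq_square algebra_simps)

lemma varineq:
  fixes f :: "'a::real_inner \<Rightarrow> ereal"
  assumes pr: "proper_fun f" and cv: "convex_ereal_fun f" and c: "c > 0" and m: "ismin f c a p"
  shows "\<exists>P. f p = ereal P \<and> (\<forall>z Z. f z = ereal Z \<longrightarrow> 2 * c * ((a - p) \<bullet> (z - p)) \<le> Z - P)"
proof -
  obtain x0 where x0: "f x0 \<noteq> \<infinity>" using pr unfolding proper_fun_def by blast
  have ninf: "\<And>x. f x \<noteq> -\<infinity>" using pr unfolding proper_fun_def by blast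
  have "f p + ereal (c * (norm (p - a))\<^sup>2) \<le> f x0 + ereal (c * (norm (x0 - a))\<^sup>2)"
    using m unfolding ismin_def by blast
  then have "f p \<noteq> \<infinity>" using x0 by auto
  then obtain P where P: "f p = ereal P" using ninf[of p] by (cases "f p") auto
  have "2 * c * ((a - p) \<bullet> (z - p)) \<le> Z - P" if Z: "f z = ereal Z" for z Z
  proof -
    define N where "N = (norm (z - p))\<^sup>2"
    define q where "q = (a - p) \<bullet> (z - p)"
    have N0: "N \<ge> 0" unfolding N_def by simp
    have key: "2 * c * q \<le> Z - P + c * s * N" if s: "0 < s" "s < 1" for s
    proof -
      define w where "w = (1 - s) *\<^sub>R p + s *\<^sub>R z"
      have "f w \<le> ereal (1 - s) * f p + ereal s * f z"
        using cv s unfolding convex_ereal_fun_def w_def by blast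
      then have fw: "f w \<le> ereal ((1 - s) * P + s * Z)" using P Z by simp
      have "f p + ereal (c * (norm (p - a))\<^sup>2) \<le> f w + ereal (c * (norm (w - a))\<^sup>2)"
        using m unfolding ismin_def by blast
      also have "\<dots> \<le> ereal ((1 - s) * P + s * Z) + ereal (c * (norm (w - a))\<^sup>2)"
        using fw by (rule add_right_mono)
      finally have 1: "P + c * (norm (p - a))\<^sup>2 \<le> (1 - s) * P + s * Z + c * (norm (w - a))\<^sup>2"
        using P by simp
      have wa: "w - a = (p - a) + s *\<^sub>R (z - p)" unfolding w_def by (simp add: algebra_simps)
      have "(norm (w - a))\<^sup>2 = (norm (p - a))\<^sup>2 + 2 * s * ((p - a) \<bullet> (z - p)) + s\<^sup>2 * N"
        unfolding wa N_def by (rule norm_sq_lin)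
      moreover have "(p - a) \<bullet> (z - p) = - q" unfolding q_def
        by (metis inner_minus_left minus_diff_eq)
      ultimately have 2: "(norm (w - a))\<^sup>2 = (norm (p - a))\<^sup>2 - 2 * s * q + s\<^sup>2 * N" by simp
      have "s * P \<le> s * (Z - 2 * c * q + c * s * N)"
        using 1 unfolding 2 by (simp add: algebra_simps power2_eq_square)
      then have "P \<le> Z - 2 * c * q + c * s * N" using s by simp
      then show ?thesis by simp
    qed
    show ?thesis
    proof (rule ccontr)
      assume "\<not> ?thesis"
      then have dpos: "2 * c * q - (Z - P) > 0" unfolding q_def by simp
      define \<delta> where "\<delta> = 2 * c * q - (Z - P)"
      have d: "\<delta> > 0" using dpos unfolding \<delta>_def by simp
      define s where "s = \<delta> / (2 * (c * N + \<delta>))"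
      have cN: "c * N \<ge> 0" using c N0 by simp
      have s0: "0 < s" unfolding s_def using d cN by simp
      have s1: "s < 1" unfolding s_def using d cN by (simp add: field_simps)
      have "c * s * N = (c * N) * \<delta> / (2 * (c * N + \<delta>))" unfolding s_def by simp
      also have "\<dots> \<le> \<delta> / 2"
        using d cN by (simp add: field_simps mult_right_mono)
      finally have "c * s * N \<le> \<delta> / 2" .
      moreover have "\<delta> \<le> c * s * N" using key[OF s0 s1] unfolding \<delta>_def by linarith
      ultimately show False using d by linarith
    qed
  qed
  then show ?thesis using P by blast
qed

lemma firm:
  fixes f :: "'a::real_inner \<Rightarrow> ereal"
  assumes pr: "proper_fun f" and cv: "convex_ereal_fun f" and c: "c > 0"
    and mp: "ismin f c a p" and mq: "ismin f c b q"
  shows "(norm ((a - p) - (b - q)))\<^sup>2 \<le> ((a - p) - (b - q)) \<bullet> (a - b)"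
proof -
  obtain P where P: "f p = ereal P" "\<And>z Z. f z = ereal Z \<Longrightarrow> 2 * c * ((a - p) \<bullet> (z - p)) \<le> Z - P"
    using varineq[OF pr cv c mp] by blast
  obtain Q where Q: "f q = ereal Q" "\<And>z Z. f z = ereal Z \<Longrightarrow> 2 * c * ((b - q) \<bullet> (z - q)) \<le> Z - Q"
    using varineq[OF pr cv c mq] by blast
  have "2 * c * ((a - p) \<bullet> (q - p)) \<le> Q - P" using P(2)[OF Q(1)] .
  moreover have "2 * c * ((b - q) \<bullet> (p - q)) \<le> P - Q" using Q(2)[OF P(1)] .
  ultimately have "2 * c * ((a - p) \<bullet> (q - p) + (b - q) \<bullet> (p - q)) \<le> 0"
    by (simp add: distrib_left)
  then have le: "(a - p) \<bullet> (q - p) + (b - q) \<bullet> (p - q) \<le> 0" using c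
    by (simp add: mult_le_0_iff)
  define D where "D = p - q"
  define E where "E = a - b"
  have e1: "(a - p) \<bullet> (q - p) + (b - q) \<bullet> (p - q) = D \<bullet> D - E \<bullet> D"
    unfolding D_def E_def by (simp add: inner_diff_left inner_diff_right inner_commute algebra_simps)
  have e2: "(a - p) - (b - q) = E - D" unfolding D_def E_def by (simp add: algebra_simps)
  have "(norm (E - D))\<^sup>2 = E \<bullet> E - 2 * (E \<bullet> D) + D \<bullet> D"
    by (simp add: power2_norm_eq_inner inner_diff_left inner_diff_right inner_commute)
  moreover have "(E - D) \<bullet> E = E \<bullet> E - E \<bullet> D"
    by (simp add: inner_diff_left inner_diff_right inner_commute)
  ultimately show ?thesis unfolding e2 E_def[symmetric] using le e1 by linarith
qed

definition proxpred :: "('a::real_normed_vector \<Rightarrow> ereal) \<Rightarrow> 'a \<Rightarrow> 'a \<Rightarrow> bool" where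
  "proxpred F y x \<longleftrightarrow> (\<forall>z. F x + ereal ((norm (x - y))\<^sup>2 / 2) \<le> F z + ereal ((norm (z - y))\<^sup>2 / 2))"

lemma prox_eq: "prox F y = (SOME x. proxpred F y x)"
  unfolding prox_def proxpred_def by simp

lemma ereal_scale_le:
  assumes s: "s > 0" and X: "X \<noteq> -\<infinity>" and Y: "Y \<noteq> -\<infinity>"
  shows "(ereal s * X + ereal A \<le> ereal s * Y + ereal B) \<longleftrightarrow> (X + ereal (A / s) \<le> Y + ereal (B / s))"
proof (cases X)
  case (real x)
  then show ?thesis
  proof (cases Y)
    case (real y)
    have e1: "x + A / s = (s * x + A) / s" "y + B / s = (s * y + B) / s" using s by (simp_all add: field_simps)
    have "(s * x + A \<le> s * y + B) \<longleftrightarrow> (x + A / s \<le> y + B / s)"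
      unfolding e1 using s by (simp add: divide_le_cancel)
    then show ?thesis using \<open>X = ereal x\<close> real by simp
  qed (use s Y in auto)
qed (use s X in auto)

lemma prox_scaled:
  fixes f :: "'a::euclidean_space \<Rightarrow> ereal"
  assumes pr: "proper_fun f" and cv: "convex_ereal_fun f" and ls: "lsc_fun f" and t: "t > 0"
  shows "ismin f (1 / (2 * t)) a (prox (\<lambda>u. ereal t * f u) a)"
proof -
  have ninf: "\<And>x. f x \<noteq> -\<infinity>" using pr unfolding proper_fun_def by blast
  have eq: "proxpred (\<lambda>u. ereal t * f u) a x \<longleftrightarrow> ismin f (1 / (2 * t)) a x" for x
  proof -
    have "(ereal t * f x + ereal ((norm (x - a))\<^sup>2 / 2) \<le> ereal t * f z + ereal ((norm (z - a))\<^sup>2 / 2))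
      \<longleftrightarrow> (f x + ereal (1 / (2 * t) * (norm (x - a))\<^sup>2) \<le> f z + ereal (1 / (2 * t) * (norm (z - a))\<^sup>2))" for z
      using ereal_scale_le[OF t ninf[of x] ninf[of z]] by simp
    then show ?thesis unfolding proxpred_def ismin_def by simp
  qed
  obtain P where "ismin f (1 / (2 * t)) a P" using exists_min[OF pr cv ls] t by force
  then have "\<exists>x. proxpred (\<lambda>u. ereal t * f u) a x" using eq by blast
  then have "proxpred (\<lambda>u. ereal t * f u) a (prox (\<lambda>u. ereal t * f u) a)"
    unfolding prox_eq by (rule someI_ex)
  then show ?thesis using eq by blast
qed

lemma prox_h:
  fixes f :: "'a::euclidean_space \<Rightarrow> ereal"
  assumes pr: "proper_fun f" and cv: "convex_ereal_fun f" and ls: "lsc_fun f" and t: "t > 0"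
    and st: "s * t = 1"
  shows "ismin f (1 / (2 * t)) (t *\<^sub>R w) (t *\<^sub>R prox (\<lambda>u. ereal s * f (t *\<^sub>R u)) w)"
proof -
  have ninf: "\<And>x. f x \<noteq> -\<infinity>" using pr unfolding proper_fun_def by blast
  have s_eq: "s = 1 / t" using st t by (simp add: eq_divide_eq)
  have s: "s > 0" using t s_eq by simp
  have ss: "A / s = 1 / (2 * t) * (norm (t *\<^sub>R u - t *\<^sub>R w))\<^sup>2" if "A = (norm (u - w))\<^sup>2 / 2" for A u
  proof -
    have "norm (t *\<^sub>R u - t *\<^sub>R w) = t * norm (u - w)"
      using t by (metis abs_of_pos norm_scaleR scaleR_right_diff_distrib)
    then show ?thesis using that t unfolding s_eq by (simp add: field_simps power2_eq_square)
  qed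
  have eq: "proxpred (\<lambda>u. ereal s * f (t *\<^sub>R u)) w x \<longleftrightarrow> ismin f (1 / (2 * t)) (t *\<^sub>R w) (t *\<^sub>R x)" for x
  proof -
    have pt: "(ereal s * f (t *\<^sub>R x) + ereal ((norm (x - w))\<^sup>2 / 2) \<le> ereal s * f (t *\<^sub>R u) + ereal ((norm (u - w))\<^sup>2 / 2))
      \<longleftrightarrow> (f (t *\<^sub>R x) + ereal (1 / (2 * t) * (norm (t *\<^sub>R x - t *\<^sub>R w))\<^sup>2) \<le> f (t *\<^sub>R u) + ereal (1 / (2 * t) * (norm (t *\<^sub>R u - t *\<^sub>R w))\<^sup>2))" for u
      using ereal_scale_le[OF s ninf[of "t *\<^sub>R x"] ninf[of "t *\<^sub>R u"], of "(norm (x - w))\<^sup>2 / 2" "(norm (u - w))\<^sup>2 / 2"]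
        ss[OF refl, of x] ss[OF refl, of u] by simp
    have surj: "t *\<^sub>R ((1 / t) *\<^sub>R z) = z" for z :: 'a using t by simp
    show ?thesis unfolding proxpred_def ismin_def
    proof
      assume H: "\<forall>u. ereal s * f (t *\<^sub>R x) + ereal ((norm (x - w))\<^sup>2 / 2) \<le> ereal s * f (t *\<^sub>R u) + ereal ((norm (u - w))\<^sup>2 / 2)"
      show "\<forall>z. f (t *\<^sub>R x) + ereal (1 / (2 * t) * (norm (t *\<^sub>R x - t *\<^sub>R w))\<^sup>2) \<le> f z + ereal (1 / (2 * t) * (norm (z - t *\<^sub>R w))\<^sup>2)"
      proof (intro allI)
        fix z
        have "f (t *\<^sub>R x) + ereal (1 / (2 * t) * (norm (t *\<^sub>R x - t *\<^sub>R w))\<^sup>2) \<le> f (t *\<^sub>R ((1 / t) *\<^sub>R z)) + ereal (1 / (2 * t) * (norm (t *\<^sub>R ((1 / t) *\<^sub>R z) - t *\<^sub>R w))\<^sup>2)"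
          using H pt by blast
        then show "f (t *\<^sub>R x) + ereal (1 / (2 * t) * (norm (t *\<^sub>R x - t *\<^sub>R w))\<^sup>2) \<le> f z + ereal (1 / (2 * t) * (norm (z - t *\<^sub>R w))\<^sup>2)"
          using surj[of z] by simp
      qed
    next
      assume "\<forall>z. f (t *\<^sub>R x) + ereal (1 / (2 * t) * (norm (t *\<^sub>R x - t *\<^sub>R w))\<^sup>2) \<le> f z + ereal (1 / (2 * t) * (norm (z - t *\<^sub>R w))\<^sup>2)"
      then show "\<forall>u. ereal s * f (t *\<^sub>R x) + ereal ((norm (x - w))\<^sup>2 / 2) \<le> ereal s * f (t *\<^sub>R u) + ereal ((norm (u - w))\<^sup>2 / 2)"
        using pt by blast
    qed
  qed
  obtain P where P: "ismin f (1 / (2 * t)) (t *\<^sub>R w) P" using exists_min[OF pr cv ls] t by force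
  have "t *\<^sub>R ((1 / t) *\<^sub>R P) = P" using t by (simp add: scaleR_scaleR)
  then have "proxpred (\<lambda>u. ereal s * f (t *\<^sub>R u)) w ((1 / t) *\<^sub>R P)" using eq[of "(1 / t) *\<^sub>R P"] P by simp
  then have "\<exists>x. proxpred (\<lambda>u. ereal s * f (t *\<^sub>R u)) w x" by blast
  then have "proxpred (\<lambda>u. ereal s * f (t *\<^sub>R u)) w (prox (\<lambda>u. ereal s * f (t *\<^sub>R u)) w)"
    unfolding prox_eq by (rule someI_ex)
  then show ?thesis using eq by blast
qed

lemma sym_inner:
  fixes A :: "real^'n^'n"
  assumes "transpose A = A"
  shows "x \<bullet> (A *v y) = (A *v x) \<bullet> y"
proof -
  have "x \<bullet> (A *v y) = (x v* A) \<bullet> y" by (simp add: dot_lmul_matrix)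
  also have "x v* A = x v* transpose A" using assms by simp
  also have "\<dots> = A *v x" by simp
  finally show ?thesis .
qed

lemma eig_finite:
  fixes A :: "real^'n^'n"
  assumes sym: "transpose A = A"
  shows "finite (eigenvalues A)"
proof -
  define E where "E = eigenvalues A"
  define ev where "ev \<mu> = (SOME w. w \<noteq> 0 \<and> A *v w = \<mu> *\<^sub>R w)" for \<mu>
  have ev: "ev \<mu> \<noteq> 0 \<and> A *v ev \<mu> = \<mu> *\<^sub>R ev \<mu>" if "\<mu> \<in> E" for \<mu>
  proof -
    have "\<exists>w. w \<noteq> 0 \<and> A *v w = \<mu> *\<^sub>R w" using that unfolding E_def eigenvalues_def by blast
    then show ?thesis unfolding ev_def by (rule someI_ex)
  qed
  have inj: "inj_on ev E"
  proof (rule inj_onI)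
    fix \<mu> \<nu> assume m: "\<mu> \<in> E" "\<nu> \<in> E" "ev \<mu> = ev \<nu>"
    then have "\<mu> *\<^sub>R ev \<mu> = \<nu> *\<^sub>R ev \<mu>" using ev[of \<mu>] ev[of \<nu>] by metis
    then show "\<mu> = \<nu>" using ev[OF m(1)] by (simp add: scaleR_cancel_right)
  qed
  have orth: "pairwise orthogonal (ev ` E)"
  proof (rule pairwiseI)
    fix w1 w2 assume w: "w1 \<in> ev ` E" "w2 \<in> ev ` E" "w1 \<noteq> w2"
    then obtain \<mu> \<nu> where mn: "\<mu> \<in> E" "\<nu> \<in> E" "w1 = ev \<mu>" "w2 = ev \<nu>" by blast
    then have "\<mu> \<noteq> \<nu>" using w(3) by blast
    have "\<mu> * (w1 \<bullet> w2) = (A *v w1) \<bullet> w2" using ev[OF mn(1)] mn(3) by simp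
    also have "\<dots> = w1 \<bullet> (A *v w2)" using sym_inner[OF sym] by simp
    also have "\<dots> = \<nu> * (w1 \<bullet> w2)" using ev[OF mn(2)] mn(4) by simp
    finally have "(\<mu> - \<nu>) * (w1 \<bullet> w2) = 0" by (simp add: algebra_simps)
    then show "orthogonal w1 w2" using \<open>\<mu> \<noteq> \<nu>\<close> unfolding orthogonal_def by simp
  qed
  have "0 \<notin> ev ` E"
  proof
    assume "0 \<in> ev ` E"
    then obtain \<mu> where "\<mu> \<in> E" "0 = ev \<mu>" by blast
    then show False using ev[of \<mu>] by simp
  qed
  then have "independent (ev ` E)" using orth pairwise_orthogonal_independent by blast
  then have "finite (ev ` E)" using independent_bound by blast
  then show ?thesis using inj finite_imageD unfolding E_def by blast
qed

lemma quad_expand: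
  fixes A :: "real^'n^'n"
  assumes sym: "transpose A = A"
  shows "(x + s *\<^sub>R r) \<bullet> (A *v (x + s *\<^sub>R r)) = x \<bullet> (A *v x) + 2 * s * (r \<bullet> (A *v x)) + s\<^sup>2 * (r \<bullet> (A *v r))"
proof -
  have "x \<bullet> (A *v r) = r \<bullet> (A *v x)" using sym_inner[OF sym, of x r] by (simp add: inner_commute)
  then show ?thesis
    by (simp add: matrix_vector_right_distrib matrix_vector_mult_scaleR inner_add_left inner_add_right
        power2_eq_square algebra_simps)
qed

lemma rayleigh_max:
  fixes A :: "real^'n^'n"
  assumes sym: "transpose A = A"
  shows "\<exists>\<mu>\<in>eigenvalues A. \<forall>u. u \<bullet> (A *v u) \<le> \<mu> * (norm u)\<^sup>2"
proof -
  define q where "q u = u \<bullet> (A *v u)" for u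
  define S where "S = sphere (0::real^'n) 1"
  obtain e :: "real^'n" where e: "norm e = 1" using vector_choose_size[of 1] by auto
  have Sne: "S \<noteq> {}" using e unfolding S_def by auto
  have cont: "continuous_on S q" unfolding q_def by (intro continuous_intros)
  obtain u0 where u0: "u0 \<in> S" "\<forall>y\<in>S. q y \<le> q u0"
    using continuous_attains_sup[of S q] Sne cont unfolding S_def by auto
  define \<mu> where "\<mu> = q u0"
  have nu0: "norm u0 = 1" using u0 unfolding S_def by simp
  have qscale: "q (c *\<^sub>R u) = c\<^sup>2 * q u" for c u
    unfolding q_def by (simp add: matrix_vector_mult_scaleR power2_eq_square)
  have bound: "q u \<le> \<mu> * (norm u)\<^sup>2" for u
  proof (cases "u = 0")
    case True then show ?thesis unfolding q_def by simp
  next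
    case False
    define v where "v = (1 / norm u) *\<^sub>R u"
    have "v \<in> S" unfolding v_def S_def using False by simp
    then have "q v \<le> \<mu>" using u0 unfolding \<mu>_def by blast
    moreover have "u = norm u *\<^sub>R v" unfolding v_def using False by simp
    then have "q u = (norm u)\<^sup>2 * q v" using qscale by metis
    ultimately show ?thesis using mult_right_mono[OF \<open>q v \<le> \<mu>\<close>, of "(norm u)\<^sup>2"] by (simp add: mult.commute)
  qed
  define r where "r = A *v u0 - \<mu> *\<^sub>R u0"
  define K where "K = \<mu> * (norm r)\<^sup>2 - q r"
  have ineq: "2 * s * (norm r)\<^sup>2 \<le> s\<^sup>2 * K" for s
  proof -
    have "q (u0 + s *\<^sub>R r) \<le> \<mu> * (norm (u0 + s *\<^sub>R r))\<^sup>2" by (rule bound)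
    moreover have "q (u0 + s *\<^sub>R r) = \<mu> + 2 * s * (r \<bullet> (A *v u0)) + s\<^sup>2 * q r"
      unfolding q_def using quad_expand[OF sym, of u0 s r] unfolding \<mu>_def q_def by simp
    moreover have "(norm (u0 + s *\<^sub>R r))\<^sup>2 = 1 + 2 * s * (u0 \<bullet> r) + s\<^sup>2 * (norm r)\<^sup>2"
      unfolding norm_sq_lin nu0 by simp
    moreover have "r \<bullet> (A *v u0) - \<mu> * (u0 \<bullet> r) = (norm r)\<^sup>2"
      unfolding r_def by (simp add: power2_norm_eq_inner inner_diff_left inner_diff_right inner_commute algebra_simps)
    ultimately show ?thesis unfolding K_def by (simp add: algebra_simps)
  qed
  have "r = 0"
  proof (rule ccontr)
    assume "r \<noteq> 0"
    then have n: "(norm r)\<^sup>2 > 0" by simp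
    define s where "s = (norm r)\<^sup>2 / (\<bar>K\<bar> + 1)"
    have s0: "s > 0" unfolding s_def using n by simp
    have "s * K \<le> s * \<bar>K\<bar>" using s0 by (simp add: mult_left_mono)
    also have "s * \<bar>K\<bar> < (norm r)\<^sup>2" unfolding s_def using n by (simp add: field_simps)
    finally have "s * K < (norm r)\<^sup>2" .
    moreover have "2 * (norm r)\<^sup>2 \<le> s * K" using ineq[of s] s0 by (simp add: power2_eq_square)
    ultimately show False using n by linarith
  qed
  then have "A *v u0 = \<mu> *\<^sub>R u0" unfolding r_def by simp
  moreover have "u0 \<noteq> 0" using nu0 by auto
  ultimately have "\<mu> \<in> eigenvalues A" unfolding eigenvalues_def by blast
  then show ?thesis using bound unfolding q_def by blast
qed

lemma core_real:
  fixes lam t H YD Y E ED YZ Z Dd rho :: real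
  assumes lam: "lam > 0" and t: "t > 0"
    and firm: "t\<^sup>2 * E \<le> t * (YD + t * (ED - lam * YZ))"
    and psd: "lam * (Y - 2 * YZ + Z) \<le> E - 2 * ED + Dd"
    and hmin: "rho * Dd \<le> Z"
  shows "H - 2 * (lam * t) * YD + (lam * t)\<^sup>2 * Y + (lam * t)\<^sup>2 / lam * E
         \<le> H + (lam * t)\<^sup>2 / lam * (1 - lam * rho) * Dd"
proof -
  have e1: "(lam * t)\<^sup>2 / lam = lam * t\<^sup>2" using lam by (simp add: power2_eq_square)
  have f2: "(2 * lam) * (t\<^sup>2 * E) \<le> (2 * lam) * (t * (YD + t * (ED - lam * YZ)))"
    using mult_left_mono[OF firm, of "2 * lam"] lam by simp
  have h2: "lam * (rho * Dd) \<le> lam * Z" using mult_left_mono[OF hmin, of lam] lam by simp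
  have g: "lam * Y - E + 2 * ED - 2 * (lam * YZ) \<le> Dd - lam * (rho * Dd)"
    using psd h2 by (simp add: algebra_simps)
  have g2: "(lam * t\<^sup>2) * (lam * Y - E + 2 * ED - 2 * (lam * YZ)) \<le> (lam * t\<^sup>2) * (Dd - lam * (rho * Dd))"
    using mult_left_mono[OF g, of "lam * t\<^sup>2"] lam t by simp
  show ?thesis unfolding e1 using f2 g2 by (simp add: algebra_simps power2_eq_square)
qed

lemma transpose_neg: "transpose (- A) = - transpose (A :: real^'n^'m)"
  by (simp add: transpose_def vec_eq_iff)

lemma neg_mv: "(- A) *v x = - (A *v (x :: real^'n))" for A :: "real^'n^'m"
  by (simp add: matrix_vector_mult_def vec_eq_iff sum_negf)

lemma eig_quad:
  fixes A :: "real^'n^'n"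
  assumes "A *v w = \<nu> *\<^sub>R w"
  shows "w \<bullet> (A *v w) = \<nu> * (norm w)\<^sup>2"
  using assms by (simp add: power2_norm_eq_inner)

lemma rho_bounds:
  fixes A :: "real^'n^'n"
  assumes sym: "transpose A = A"
  shows "\<And>u. u \<bullet> (A *v u) \<le> rho_max A * (norm u)\<^sup>2"
    and "\<And>u. rho_min A * (norm u)\<^sup>2 \<le> u \<bullet> (A *v u)"
proof -
  have fin: "finite (eigenvalues A)" by (rule eig_finite[OF sym])
  have eigE: "\<exists>w. w \<noteq> 0 \<and> B *v w = \<nu> *\<^sub>R w" if "\<nu> \<in> eigenvalues B" for \<nu> and B :: "real^'n^'n"
    using that unfolding eigenvalues_def by simp
  from rayleigh_max[OF sym] obtain \<mu> where \<mu>1: "\<mu> \<in> eigenvalues A"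
    and \<mu>2: "\<forall>u. u \<bullet> (A *v u) \<le> \<mu> * (norm u)\<^sup>2" ..
  have le: "\<nu> \<le> \<mu>" if "\<nu> \<in> eigenvalues A" for \<nu>
  proof -
    from eigE[OF that] obtain w where w: "w \<noteq> 0" "A *v w = \<nu> *\<^sub>R w" by blast
    have "w \<bullet> (A *v w) \<le> \<mu> * (norm w)\<^sup>2" using \<mu>2 by blast
    then have "\<nu> * (norm w)\<^sup>2 \<le> \<mu> * (norm w)\<^sup>2" unfolding eig_quad[OF w(2)] .
    moreover have "(norm w)\<^sup>2 > 0" using w by simp
    ultimately show ?thesis by (simp add: mult_le_cancel_right_pos)
  qed
  have "rho_max A = \<mu>" unfolding rho_max_def by (rule Max_eqI[OF fin le \<mu>1])
  then show "\<And>u. u \<bullet> (A *v u) \<le> rho_max A * (norm u)\<^sup>2" using \<mu>2 by simp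
  have symn: "transpose (- A) = - A" using sym by (simp add: transpose_neg)
  from rayleigh_max[OF symn] obtain \<mu>' where \<mu>1': "\<mu>' \<in> eigenvalues (- A)"
    and \<mu>2': "\<forall>u. u \<bullet> ((- A) *v u) \<le> \<mu>' * (norm u)\<^sup>2" ..
  have b': "- \<mu>' * (norm u)\<^sup>2 \<le> u \<bullet> (A *v u)" for u
  proof -
    have "u \<bullet> ((- A) *v u) \<le> \<mu>' * (norm u)\<^sup>2" using \<mu>2' by blast
    then show ?thesis by (simp add: neg_mv)
  qed
  have m1: "- \<mu>' \<in> eigenvalues A"
  proof -
    from eigE[OF \<mu>1'] obtain w where w: "w \<noteq> 0" "(- A) *v w = \<mu>' *\<^sub>R w" by blast
    then have "- (A *v w) = \<mu>' *\<^sub>R w" by (simp only: neg_mv)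
    then have "A *v w = - (\<mu>' *\<^sub>R w)" by (metis minus_minus)
    then have "A *v w = (- \<mu>') *\<^sub>R w" by simp
    then show ?thesis using w(1) unfolding eigenvalues_def by blast
  qed
  have ge: "- \<mu>' \<le> \<nu>" if "\<nu> \<in> eigenvalues A" for \<nu>
  proof -
    from eigE[OF that] obtain w where w: "w \<noteq> 0" "A *v w = \<nu> *\<^sub>R w" by blast
    have "- \<mu>' * (norm w)\<^sup>2 \<le> w \<bullet> (A *v w)" by (rule b')
    then have ineq: "- \<mu>' * (norm w)\<^sup>2 \<le> \<nu> * (norm w)\<^sup>2" unfolding eig_quad[OF w(2)] .
    have pos: "(norm w)\<^sup>2 > 0" using w by simp
    show ?thesis using iffD1[OF mult_le_cancel_right_pos[OF pos] ineq] .
  qed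
  have "rho_min A = - \<mu>'" unfolding rho_min_def by (rule Min_eqI[OF fin ge m1])
  then show "\<And>u. rho_min A * (norm u)\<^sup>2 \<le> u \<bullet> (A *v u)" using b' by simp
qed

lemma sym_BBt: "transpose (B ** transpose B) = B ** transpose (B :: real^'d^'m)"
  by (simp add: matrix_transpose_mul)

lemma bil_BBt:
  fixes B :: "real^'d^'m"
  shows "e \<bullet> ((B ** transpose B) *v d) = (transpose B *v e) \<bullet> (transpose B *v d)"
proof -
  have "e \<bullet> ((B ** transpose B) *v d) = e \<bullet> (B *v (transpose B *v d))"
    by (simp only: matrix_vector_mul_assoc)
  also have "\<dots> = (e v* B) \<bullet> (transpose B *v d)" by (simp add: dot_lmul_matrix)
  also have "e v* B = transpose B *v e" by simp
  finally show ?thesis .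
qed

lemma bil_B:
  fixes B :: "real^'d^'m"
  shows "e \<bullet> (B *v h) = (transpose B *v e) \<bullet> h"
  by (simp add: dot_lmul_matrix[symmetric])

lemma core_vec:
  fixes B :: "real^'d^'m" and e d :: "real^'m" and Dh :: "real^'d"
  assumes lam: "lam > 0" and t: "t > 0"
    and hmax: "\<And>u. u \<bullet> ((B ** transpose B) *v u) \<le> rmax * (norm u)\<^sup>2" and lr: "lam * rmax \<le> 1"
    and hmin: "\<And>u. rmin * (norm u)\<^sup>2 \<le> u \<bullet> ((B ** transpose B) *v u)"
    and firm: "(norm (t *\<^sub>R e))\<^sup>2 \<le> (t *\<^sub>R e) \<bullet> (B *v Dh + t *\<^sub>R (d - lam *\<^sub>R ((B ** transpose B) *v d)))"
  shows "(norm (Dh - (lam * t) *\<^sub>R (transpose B *v e)))\<^sup>2 + (lam * t)\<^sup>2 / lam * (norm e)\<^sup>2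
         \<le> (norm Dh)\<^sup>2 + (lam * t)\<^sup>2 / lam * (1 - lam * rmin) * (norm d)\<^sup>2"
proof -
  define y where "y = transpose B *v e"
  define z where "z = transpose B *v d"
  have q: "u \<bullet> ((B ** transpose B) *v u) = (norm (transpose B *v u))\<^sup>2" for u
    unfolding bil_BBt by (simp add: power2_norm_eq_inner)
  have psd0: "lam * (norm (y - z))\<^sup>2 \<le> (norm (e - d))\<^sup>2"
  proof -
    have "y - z = transpose B *v (e - d)" unfolding y_def z_def by (simp add: matrix_vector_mult_diff_distrib)
    then have "(norm (y - z))\<^sup>2 \<le> rmax * (norm (e - d))\<^sup>2" using hmax[of "e - d"] q by simp
    then have "lam * (norm (y - z))\<^sup>2 \<le> lam * (rmax * (norm (e - d))\<^sup>2)"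
      using lam by (simp add: mult_left_mono)
    also have "\<dots> = (lam * rmax) * (norm (e - d))\<^sup>2" by simp
    also have "\<dots> \<le> 1 * (norm (e - d))\<^sup>2" by (rule mult_right_mono[OF lr]) simp
    finally show ?thesis by simp
  qed
  have psd: "lam * ((norm y)\<^sup>2 - 2 * (y \<bullet> z) + (norm z)\<^sup>2) \<le> (norm e)\<^sup>2 - 2 * (e \<bullet> d) + (norm d)\<^sup>2"
    using psd0 by (simp add: power2_norm_eq_inner inner_diff_left inner_diff_right inner_commute algebra_simps)
  have hm: "rmin * (norm d)\<^sup>2 \<le> (norm z)\<^sup>2" using hmin[of d] q unfolding z_def by simp
  have fm: "t\<^sup>2 * (norm e)\<^sup>2 \<le> t * (y \<bullet> Dh + t * (e \<bullet> d - lam * (y \<bullet> z)))"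
  proof -
    have "(t *\<^sub>R e) \<bullet> (B *v Dh + t *\<^sub>R (d - lam *\<^sub>R ((B ** transpose B) *v d)))
        = t * (e \<bullet> (B *v Dh) + t * (e \<bullet> d - lam * (e \<bullet> ((B ** transpose B) *v d))))"
      by (simp add: inner_add_right inner_diff_right algebra_simps)
    also have "\<dots> = t * (y \<bullet> Dh + t * (e \<bullet> d - lam * (y \<bullet> z)))"
    proof -
      have i1: "e \<bullet> ((B ** transpose B) *v d) = y \<bullet> z" unfolding y_def z_def by (rule bil_BBt)
      have i2: "e \<bullet> (B *v Dh) = y \<bullet> Dh" unfolding y_def by (rule bil_B)
      show ?thesis by (simp only: i1 i2)
    qed
    finally have eq: "(t *\<^sub>R e) \<bullet> (B *v Dh + t *\<^sub>R (d - lam *\<^sub>R ((B ** transpose B) *v d)))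
        = t * (y \<bullet> Dh + t * (e \<bullet> d - lam * (y \<bullet> z)))" .
    have nsq: "(norm (t *\<^sub>R e))\<^sup>2 = t\<^sup>2 * (norm e)\<^sup>2" by (simp add: power_mult_distrib)
    show ?thesis using firm unfolding eq nsq .
  qed
  have lhs: "(norm (Dh - (lam * t) *\<^sub>R y))\<^sup>2 = (norm Dh)\<^sup>2 - 2 * (lam * t) * (y \<bullet> Dh) + (lam * t)\<^sup>2 * (norm y)\<^sup>2"
    unfolding power2_norm_eq_inner by (simp add: power2_norm_eq_inner inner_diff_left inner_diff_right inner_commute power2_eq_square algebra_simps)
  show ?thesis
    unfolding y_def[symmetric] lhs
    by (rule core_real[OF lam t fm psd hm])
qed

lemma sum_PiE_insert:
  assumes kI: "k \<notin> I"
  shows "(\<Sum>s\<in>PiE (insert k I) T. G s) = (\<Sum>y\<in>T k. \<Sum>g\<in>PiE I T. G (g(k := y)))"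
proof -
  have "(\<Sum>s\<in>PiE (insert k I) T. G s) = sum (G \<circ> (\<lambda>(y, g). g(k := y))) (T k \<times> PiE I T)"
    unfolding PiE_insert_eq by (rule sum.reindex[OF inj_combinator[OF kI]])
  also have "\<dots> = (\<Sum>(y, g)\<in>T k \<times> PiE I T. G (g(k := y)))"
    by (rule sum.cong) auto
  also have "\<dots> = (\<Sum>y\<in>T k. \<Sum>g\<in>PiE I T. G (g(k := y)))"
    by (rule sum.cartesian_product[symmetric])
  finally show ?thesis .
qed

lemma expect_split:
  assumes k: "1 \<le> k" and N: "0 < N"
  shows "expect_k N (k + 1) G =
    (\<Sum>s\<in>PiE {1..<k} (\<lambda>_. {..<N}). \<Sum>i<N. G (s(k := i))) / (real N * real (card (PiE {1..<k} (\<lambda>_. {..<N}))))"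
proof -
  have ins: "{1..<k + 1} = insert k {1..<k}" using k by auto
  have kI: "k \<notin> {1..<k}" by simp
  have c: "card (PiE {1..<k + 1} (\<lambda>_. {..<N})) = N * card (PiE {1..<k} (\<lambda>_. {..<N}))"
    unfolding ins by (simp add: card_PiE)
  have "(\<Sum>s\<in>PiE {1..<k + 1} (\<lambda>_. {..<N}). G s) = (\<Sum>i<N. \<Sum>s\<in>PiE {1..<k} (\<lambda>_. {..<N}). G (s(k := i)))"
    unfolding ins by (rule sum_PiE_insert[OF kI])
  also have "\<dots> = (\<Sum>s\<in>PiE {1..<k} (\<lambda>_. {..<N}). \<Sum>i<N. G (s(k := i)))"
    by (rule sum.swap)
  finally show ?thesis unfolding expect_k_def c by simp
qed

lemma card_P_pos:
  assumes "0 < N" shows "0 < card (PiE {1..<(k::nat)} (\<lambda>_. {..<(N::nat)}))"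
proof -
  have "card (PiE {1..<k} (\<lambda>_. {..<N})) = (\<Prod>i\<in>{1..<k}. card {..<N})" by (rule card_PiE) simp
  then show ?thesis using assms by simp
qed

lemma one_step:
  fixes f1 :: "real^'m \<Rightarrow> ereal" and B :: "real^'d^'m"
    and X xs Xn G Gs :: "real^'d" and V vs Vn :: "real^'m"
  assumes f1: "proper_fun f1" "convex_ereal_fun f1" "lsc_fun f1"
    and lam: "0 < lam" and gam: "0 < gam" and lr: "lam * rho_max (B ** transpose B) \<le> 1"
    and Vn: "Vn = (lam / gam) *\<^sub>R ((B *v (X - gam *\<^sub>R G) + (gam / lam) *\<^sub>R (V - lam *\<^sub>R ((B ** transpose B) *v V)))
          - prox (\<lambda>u. ereal (gam / lam) * f1 u) (B *v (X - gam *\<^sub>R G) + (gam / lam) *\<^sub>R (V - lam *\<^sub>R ((B ** transpose B) *v V))))"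
    and Xn: "Xn = X - gam *\<^sub>R G - gam *\<^sub>R (transpose B *v Vn)"
    and vsf: "vs = ((lam / gam) *\<^sub>R (B *v (xs - gam *\<^sub>R Gs)) + (vs - lam *\<^sub>R ((B ** transpose B) *v vs)))
          - prox (\<lambda>u. ereal (lam / gam) * f1 ((gam / lam) *\<^sub>R u)) ((lam / gam) *\<^sub>R (B *v (xs - gam *\<^sub>R Gs)) + (vs - lam *\<^sub>R ((B ** transpose B) *v vs)))"
    and xsf: "xs = xs - gam *\<^sub>R Gs - gam *\<^sub>R (transpose B *v vs)"
  shows "(norm (Xn - xs))\<^sup>2 + gam\<^sup>2 / lam * (norm (Vn - vs))\<^sup>2
     \<le> (norm (X - xs))\<^sup>2 - 2 * gam * ((G - Gs) \<bullet> (X - xs)) + gam\<^sup>2 * (norm (G - Gs))\<^sup>2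
       + gam\<^sup>2 / lam * (1 - lam * rho_min (B ** transpose B)) * (norm (V - vs))\<^sup>2"
proof -
  define t where "t = gam / lam"
  have t: "t > 0" unfolding t_def using lam gam by simp
  have gt: "gam = lam * t" unfolding t_def using lam by simp
  have st: "(lam / gam) * t = 1" unfolding t_def using lam gam by simp
  define A where "A = B ** transpose B"
  define a where "a = B *v (X - gam *\<^sub>R G) + t *\<^sub>R (V - lam *\<^sub>R (A *v V))"
  define p where "p = prox (\<lambda>u. ereal t * f1 u) a"
  define wh where "wh = (lam / gam) *\<^sub>R (B *v (xs - gam *\<^sub>R Gs)) + (vs - lam *\<^sub>R (A *v vs))"
  define q0 where "q0 = prox (\<lambda>u. ereal (lam / gam) * f1 (t *\<^sub>R u)) wh"
  define b where "b = t *\<^sub>R wh"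
  define q where "q = t *\<^sub>R q0"
  have mp: "ismin f1 (1 / (2 * t)) a p" unfolding p_def by (rule prox_scaled[OF f1 t])
  have mq: "ismin f1 (1 / (2 * t)) b q" unfolding b_def q_def q0_def by (rule prox_h[OF f1 t st])
  have hf: "1 / (2 * t) > 0" using t by simp
  have fi: "(norm ((a - p) - (b - q)))\<^sup>2 \<le> ((a - p) - (b - q)) \<bullet> (a - b)"
    by (rule firm[OF f1(1,2) hf mp mq])
  have tinv: "t *\<^sub>R ((lam / gam) *\<^sub>R y) = y" for y :: "real^'m"
  proof -
    have st': "t * (lam / gam) = 1" using st by (simp only: mult.commute)
    show ?thesis unfolding scaleR_scaleR st' by simp
  qed
  have ap: "a - p = t *\<^sub>R Vn" unfolding Vn a_def p_def A_def t_def[symmetric] tinv ..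
  have bq: "b - q = t *\<^sub>R vs"
  proof -
    have "vs = wh - q0" using vsf unfolding wh_def q0_def A_def t_def .
    then show ?thesis unfolding b_def q_def by (simp add: scaleR_diff_right)
  qed
  define e where "e = Vn - vs"
  define d where "d = V - vs"
  define Dh where "Dh = (X - gam *\<^sub>R G) - (xs - gam *\<^sub>R Gs)"
  have ab: "a - b = B *v Dh + t *\<^sub>R (d - lam *\<^sub>R (A *v d))"
  proof -
    have "b = B *v (xs - gam *\<^sub>R Gs) + t *\<^sub>R (vs - lam *\<^sub>R (A *v vs))"
      unfolding b_def wh_def scaleR_add_right tinv ..
    then show ?thesis unfolding a_def Dh_def d_def
      by (simp add: matrix_vector_mult_diff_distrib scaleR_diff_right algebra_simps)
  qed
  have ee: "(a - p) - (b - q) = t *\<^sub>R e" unfolding ap bq e_def by (simp add: scaleR_diff_right)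
  have fi2: "(norm (t *\<^sub>R e))\<^sup>2 \<le> (t *\<^sub>R e) \<bullet> (B *v Dh + t *\<^sub>R (d - lam *\<^sub>R ((B ** transpose B) *v d)))"
    using fi unfolding ee ab A_def .
  have core: "(norm (Dh - (lam * t) *\<^sub>R (transpose B *v e)))\<^sup>2 + (lam * t)\<^sup>2 / lam * (norm e)\<^sup>2
         \<le> (norm Dh)\<^sup>2 + (lam * t)\<^sup>2 / lam * (1 - lam * rho_min (B ** transpose B)) * (norm d)\<^sup>2"
    by (rule core_vec[OF lam t rho_bounds(1)[OF sym_BBt] lr rho_bounds(2)[OF sym_BBt] fi2])
  have z: "gam *\<^sub>R Gs + gam *\<^sub>R (transpose B *v vs) = 0"
  proof -
    have h1: "xs - gam *\<^sub>R Gs - gam *\<^sub>R (transpose B *v vs) = xs" using xsf[symmetric] .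
    have "gam *\<^sub>R Gs + gam *\<^sub>R (transpose B *v vs) = xs - (xs - gam *\<^sub>R Gs - gam *\<^sub>R (transpose B *v vs))"
      by (simp add: algebra_simps)
    then show ?thesis unfolding h1 by simp
  qed
  have xn: "Xn - xs = Dh - gam *\<^sub>R (transpose B *v e)"
  proof -
    have "Dh - gam *\<^sub>R (transpose B *v e) = (Xn - xs) + (gam *\<^sub>R Gs + gam *\<^sub>R (transpose B *v vs))"
      unfolding Dh_def e_def Xn by (simp add: matrix_vector_mult_diff_distrib scaleR_diff_right algebra_simps)
    then show ?thesis unfolding z by simp
  qed
  have dh: "(norm Dh)\<^sup>2 = (norm (X - xs))\<^sup>2 - 2 * gam * ((G - Gs) \<bullet> (X - xs)) + gam\<^sup>2 * (norm (G - Gs))\<^sup>2"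
  proof -
    have dh0: "Dh = (X - xs) + (- gam) *\<^sub>R (G - Gs)" unfolding Dh_def by (simp add: algebra_simps)
    have "(norm Dh)\<^sup>2 = (norm (X - xs))\<^sup>2 + 2 * (- gam) * ((X - xs) \<bullet> (G - Gs)) + (- gam)\<^sup>2 * (norm (G - Gs))\<^sup>2"
      unfolding dh0 by (rule norm_sq_lin)
    then show ?thesis by (simp add: inner_commute)
  qed
  show ?thesis using core unfolding gt[symmetric] unfolding xn[symmetric] unfolding dh e_def d_def by simp
qed

theorem lemma4p1:
  fixes f1 :: "real^'m \<Rightarrow> ereal"
    and B :: "real^'d^'m"
    and n p :: nat
    and phi :: "nat \<Rightarrow> real^'d \<Rightarrow> real"
    and gphi :: "nat \<Rightarrow> real^'d \<Rightarrow> real^'d"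
    and f2 :: "real^'d \<Rightarrow> real"
    and g2 :: "real^'d \<Rightarrow> real^'d"
    and gb :: "nat \<Rightarrow> real^'d \<Rightarrow> real^'d"
    and c \<alpha> lam :: real
    and \<gamma> :: "nat \<Rightarrow> real"
    and x :: "nat \<Rightarrow> (nat \<Rightarrow> nat) \<Rightarrow> real^'d"
    and v :: "nat \<Rightarrow> (nat \<Rightarrow> nat) \<Rightarrow> real^'m"
    and x1 xs :: "real^'d"
    and v1 vs :: "real^'m"
  assumes f1: "proper_fun f1" "convex_ereal_fun f1" "lsc_fun f1"
    and n: "0 < n" and p: "0 < p" "p dvd n"
    and phi_convex: "\<And>j. j < n \<Longrightarrow> convex_on UNIV (phi j)"
    and phi_grad: "\<And>j z. j < n \<Longrightarrow> (phi j has_derivative (\<lambda>h. gphi j z \<bullet> h)) (at z)"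
    and f2_def: "f2 = (\<lambda>z. (1 / real n) * (\<Sum>j<n. phi j z))"
    and g2_def: "g2 = (\<lambda>z. (1 / real n) *\<^sub>R (\<Sum>j<n. gphi j z))"
    and gb_def: "gb = (\<lambda>i z. (1 / real p) *\<^sub>R (\<Sum>j\<in>{i * p..<(i + 1) * p}. gphi j z))"
    and c: "0 < c" and \<alpha>: "0 < \<alpha>" "\<alpha> \<le> 1"
    and lam: "0 < lam" "lam * rho_max (B ** transpose B) \<le> 1"
    and \<gamma>_def: "\<gamma> = (\<lambda>k. c / (real k powr \<alpha>))"
    and init_x: "\<And>s. x 1 s = x1" and init_v: "\<And>s. v 1 s = v1"
    and step_v: "\<And>k s. 1 \<le> k \<Longrightarrow>
       v (Suc k) s =
         (\<lambda>w. (lam / \<gamma> k) *\<^sub>R (w - prox (\<lambda>u. ereal (\<gamma> k / lam) * f1 u) w))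
           (B *v (x k s - \<gamma> k *\<^sub>R gb (s k) (x k s))
            + (\<gamma> k / lam) *\<^sub>R (v k s - lam *\<^sub>R ((B ** transpose B) *v v k s)))"
    and step_x: "\<And>k s. 1 \<le> k \<Longrightarrow>
       x (Suc k) s = x k s - \<gamma> k *\<^sub>R gb (s k) (x k s) - \<gamma> k *\<^sub>R (transpose B *v v (Suc k) s)"
    and xs_min: "\<And>z. f1 (B *v xs) + ereal (f2 xs) \<le> f1 (B *v z) + ereal (f2 z)"
    and vs_fix: "\<And>k. 1 \<le> k \<Longrightarrow>
       vs = (\<lambda>w. w - prox (\<lambda>u. ereal (lam / \<gamma> k) * f1 ((\<gamma> k / lam) *\<^sub>R u)) w)
              ((lam / \<gamma> k) *\<^sub>R (B *v (xs - \<gamma> k *\<^sub>R g2 xs))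
               + (vs - lam *\<^sub>R ((B ** transpose B) *v vs)))"
    and xs_fix: "\<And>k. 1 \<le> k \<Longrightarrow>
       xs = xs - \<gamma> k *\<^sub>R g2 xs - \<gamma> k *\<^sub>R (transpose B *v vs)"
    and k: "1 \<le> k"
  shows "expect_k (n div p) (k + 1)
           (\<lambda>s. (norm (x (k + 1) s - xs))\<^sup>2 + (\<gamma> (k + 1))\<^sup>2 / lam * (norm (v (k + 1) s - vs))\<^sup>2)
         \<le> expect_k (n div p) k (\<lambda>s. (norm (x k s - xs))\<^sup>2)
           + (\<gamma> k)\<^sup>2 / lam * (1 - lam * rho_min (B ** transpose B))
               * expect_k (n div p) k (\<lambda>s. (norm (v k s - vs))\<^sup>2)
           - 2 * \<gamma> k * expect_k (n div p) k (\<lambda>s. (g2 (x k s) - g2 xs) \<bullet> (x k s - xs))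
           + (\<gamma> k)\<^sup>2 * expect_k (n div p) (k + 1) (\<lambda>s. (norm (gb (s k) (x k s) - g2 xs))\<^sup>2)"
proof -
  define N where "N = n div p"
  have Np: "N * p = n" unfolding N_def using p by simp
  have N0: "0 < N" using Np n by (metis gr0I mult_zero_left)
  have gpos: "0 < \<gamma> j" if "1 \<le> j" for j
    unfolding \<gamma>_def using c that by simp
  have gk: "0 < \<gamma> k" using gpos k by simp
  have gmono: "(\<gamma> (k + 1))\<^sup>2 \<le> (\<gamma> k)\<^sup>2"
  proof -
    have "real k powr \<alpha> \<le> real (k + 1) powr \<alpha>" using \<alpha> by (intro powr_mono2) auto
    moreover have "0 < real k powr \<alpha>" using k by simp
    ultimately have "c / real (k + 1) powr \<alpha> \<le> c / real k powr \<alpha>"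
      using c by (intro divide_left_mono) auto
    then have "\<gamma> (k + 1) \<le> \<gamma> k" unfolding \<gamma>_def .
    moreover have "0 \<le> \<gamma> (k + 1)" using gpos[of "k + 1"] by simp
    ultimately show ?thesis by (rule power_mono)
  qed
  have dep: "\<forall>s s'. (\<forall>i\<in>{1..<j}. s i = s' i) \<longrightarrow> x j s = x j s' \<and> v j s = v j s'" if "1 \<le> j" for j
    using that
  proof (induct j rule: nat_induct_at_least)
    case base
    then show ?case using init_x init_v by simp
  next
    case (Suc j)
    show ?case
    proof (intro allI impI)
      fix s s' :: "nat \<Rightarrow> nat"
      assume ag: "\<forall>i\<in>{1..<Suc j}. s i = s' i"
      then have ag': "\<forall>i\<in>{1..<j}. s i = s' i" by auto
      have sj: "s j = s' j" using ag Suc(1) by auto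
      have xv: "x j s = x j s'" "v j s = v j s'" using Suc(2) ag' by blast+
      have "v (Suc j) s = v (Suc j) s'" unfolding step_v[OF Suc(1)] xv sj ..
      moreover have "x (Suc j) s = x (Suc j) s'" unfolding step_x[OF Suc(1)] xv sj calculation ..
      ultimately show "x (Suc j) s = x (Suc j) s' \<and> v (Suc j) s = v (Suc j) s'" by simp
    qed
  qed
  have upd: "x k (s(k := i)) = x k s" "v k (s(k := i)) = v k s" for s i
    using dep[OF k] by auto
  have sumgb: "(\<Sum>i<N. gb i z) = real N *\<^sub>R g2 z" for z
  proof -
    have "(\<Sum>i<N. gb i z) = (1 / real p) *\<^sub>R (\<Sum>i<N. \<Sum>j\<in>{i * p..<i * p + p}. gphi j z)"
      unfolding gb_def by (simp add: scaleR_sum_right algebra_simps)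
    also have "(\<Sum>i<N. \<Sum>j\<in>{i * p..<i * p + p}. gphi j z) = (\<Sum>j<N * p. gphi j z)"
      by (rule sum.nat_group)
    also have "(1 / real p) *\<^sub>R (\<Sum>j<N * p. gphi j z) = real N *\<^sub>R g2 z"
      unfolding g2_def Np[symmetric] using p by (simp add: scaleR_scaleR)
    finally show ?thesis .
  qed
  define P where "P = PiE {1..<k} (\<lambda>_. {..<N})"
  define C where "C = real (card P)"
  have C0: "0 < C" unfolding C_def P_def using card_P_pos[OF N0] by simp
  have NC0: "0 < real N * C" using C0 N0 by simp
  define rmin where "rmin = rho_min (B ** transpose B)"
  define c1 where "c1 = (\<gamma> k)\<^sup>2 / lam * (1 - lam * rmin)"
  define L where "L s = (norm (x (k + 1) s - xs))\<^sup>2 + (\<gamma> (k + 1))\<^sup>2 / lam * (norm (v (k + 1) s - vs))\<^sup>2" for s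
  define Dd where "Dd s = (norm (x k s - xs))\<^sup>2" for s
  define Vv where "Vv s = (norm (v k s - vs))\<^sup>2" for s
  define Gq where "Gq s = (g2 (x k s) - g2 xs) \<bullet> (x k s - xs)" for s
  define Wi where "Wi i s = (norm (gb i (x k s) - g2 xs))\<^sup>2" for i s
  have point: "L (s(k := i)) \<le> Dd s + c1 * Vv s - 2 * \<gamma> k * ((gb i (x k s) - g2 xs) \<bullet> (x k s - xs))
       + (\<gamma> k)\<^sup>2 * Wi i s" for s i
  proof -
    have Vn: "v (Suc k) (s(k := i)) = (lam / \<gamma> k) *\<^sub>R ((B *v (x k s - \<gamma> k *\<^sub>R gb i (x k s)) + (\<gamma> k / lam) *\<^sub>R (v k s - lam *\<^sub>R ((B ** transpose B) *v v k s)))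
          - prox (\<lambda>u. ereal (\<gamma> k / lam) * f1 u) (B *v (x k s - \<gamma> k *\<^sub>R gb i (x k s)) + (\<gamma> k / lam) *\<^sub>R (v k s - lam *\<^sub>R ((B ** transpose B) *v v k s))))"
      unfolding step_v[OF k] upd by simp
    have Xn: "x (Suc k) (s(k := i)) = x k s - \<gamma> k *\<^sub>R gb i (x k s) - \<gamma> k *\<^sub>R (transpose B *v v (Suc k) (s(k := i)))"
      unfolding step_x[OF k] upd by simp
    have vsf: "vs = ((lam / \<gamma> k) *\<^sub>R (B *v (xs - \<gamma> k *\<^sub>R g2 xs)) + (vs - lam *\<^sub>R ((B ** transpose B) *v vs)))
          - prox (\<lambda>u. ereal (lam / \<gamma> k) * f1 ((\<gamma> k / lam) *\<^sub>R u)) ((lam / \<gamma> k) *\<^sub>R (B *v (xs - \<gamma> k *\<^sub>R g2 xs)) + (vs - lam *\<^sub>R ((B ** transpose B) *v vs)))"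
      using vs_fix[OF k] by simp
    have os: "(norm (x (Suc k) (s(k := i)) - xs))\<^sup>2 + (\<gamma> k)\<^sup>2 / lam * (norm (v (Suc k) (s(k := i)) - vs))\<^sup>2
     \<le> (norm (x k s - xs))\<^sup>2 - 2 * \<gamma> k * ((gb i (x k s) - g2 xs) \<bullet> (x k s - xs)) + (\<gamma> k)\<^sup>2 * (norm (gb i (x k s) - g2 xs))\<^sup>2
       + (\<gamma> k)\<^sup>2 / lam * (1 - lam * rho_min (B ** transpose B)) * (norm (v k s - vs))\<^sup>2"
      by (rule one_step[OF f1 lam(1) gk lam(2) Vn Xn vsf xs_fix[OF k]])
    have "(\<gamma> (k + 1))\<^sup>2 / lam * (norm (v (Suc k) (s(k := i)) - vs))\<^sup>2 \<le> (\<gamma> k)\<^sup>2 / lam * (norm (v (Suc k) (s(k := i)) - vs))\<^sup>2"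
      using gmono lam(1) by (intro mult_right_mono divide_right_mono) auto
    then show ?thesis using os unfolding L_def Dd_def Vv_def Wi_def c1_def rmin_def by simp
  qed
  have psum: "(\<Sum>i<N. L (s(k := i))) \<le> real N * Dd s + real N * c1 * Vv s - 2 * \<gamma> k * real N * Gq s
      + (\<gamma> k)\<^sup>2 * (\<Sum>i<N. Wi i s)" for s
  proof -
    have "(\<Sum>i<N. L (s(k := i))) \<le> (\<Sum>i<N. Dd s + c1 * Vv s - 2 * \<gamma> k * ((gb i (x k s) - g2 xs) \<bullet> (x k s - xs))
       + (\<gamma> k)\<^sup>2 * Wi i s)"
      by (rule sum_mono) (rule point)
    also have "\<dots> = real N * Dd s + real N * c1 * Vv s - 2 * \<gamma> k * (\<Sum>i<N. (gb i (x k s) - g2 xs) \<bullet> (x k s - xs))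
       + (\<gamma> k)\<^sup>2 * (\<Sum>i<N. Wi i s)"
      by (simp add: sum.distrib sum_subtractf sum_distrib_left distrib_left mult.assoc)
    also have "(\<Sum>i<N. (gb i (x k s) - g2 xs) \<bullet> (x k s - xs)) = real N * Gq s"
    proof -
      have "(\<Sum>i<N. (gb i (x k s) - g2 xs) \<bullet> (x k s - xs)) = (\<Sum>i<N. gb i (x k s) - g2 xs) \<bullet> (x k s - xs)"
        by (simp add: inner_sum_left)
      also have "(\<Sum>i<N. gb i (x k s) - g2 xs) = real N *\<^sub>R (g2 (x k s) - g2 xs)"
      proof -
        have cst: "(\<Sum>i<N. g2 xs) = real N *\<^sub>R g2 xs" by (simp only: sum_constant_scaleR card_lessThan)
        show ?thesis by (simp only: sum_subtractf sumgb cst scaleR_diff_right)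
      qed
      finally show ?thesis unfolding Gq_def by simp
    qed
    finally show ?thesis by (simp only: mult.assoc)
  qed
  have E1: "expect_k N (k + 1) L = (\<Sum>s\<in>P. \<Sum>i<N. L (s(k := i))) / (real N * C)"
    unfolding P_def C_def by (rule expect_split[OF k N0])
  have E4: "expect_k N (k + 1) (\<lambda>s. (norm (gb (s k) (x k s) - g2 xs))\<^sup>2) = (\<Sum>s\<in>P. \<Sum>i<N. Wi i s) / (real N * C)"
    unfolding P_def C_def expect_split[OF k N0] Wi_def upd by simp
  have Ek: "expect_k N k F = (\<Sum>s\<in>P. F s) / C" for F
    unfolding expect_k_def P_def C_def ..
  have tot: "(\<Sum>s\<in>P. \<Sum>i<N. L (s(k := i))) \<le> real N * (\<Sum>s\<in>P. Dd s) + real N * c1 * (\<Sum>s\<in>P. Vv s)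
      - 2 * \<gamma> k * real N * (\<Sum>s\<in>P. Gq s) + (\<gamma> k)\<^sup>2 * (\<Sum>s\<in>P. \<Sum>i<N. Wi i s)"
  proof -
    have "(\<Sum>s\<in>P. \<Sum>i<N. L (s(k := i))) \<le> (\<Sum>s\<in>P. real N * Dd s + real N * c1 * Vv s - 2 * \<gamma> k * real N * Gq s
      + (\<gamma> k)\<^sup>2 * (\<Sum>i<N. Wi i s))"
      by (rule sum_mono) (rule psum)
    also have "\<dots> = real N * (\<Sum>s\<in>P. Dd s) + real N * c1 * (\<Sum>s\<in>P. Vv s)
      - 2 * \<gamma> k * real N * (\<Sum>s\<in>P. Gq s) + (\<gamma> k)\<^sup>2 * (\<Sum>s\<in>P. \<Sum>i<N. Wi i s)"
      by (simp add: sum.distrib sum_subtractf sum_distrib_left)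
    finally show ?thesis .
  qed
  have "expect_k N (k + 1) L \<le> (real N * (\<Sum>s\<in>P. Dd s) + real N * c1 * (\<Sum>s\<in>P. Vv s)
      - 2 * \<gamma> k * real N * (\<Sum>s\<in>P. Gq s) + (\<gamma> k)\<^sup>2 * (\<Sum>s\<in>P. \<Sum>i<N. Wi i s)) / (real N * C)"
    unfolding E1 using tot NC0 by (intro divide_right_mono) auto
  also have "\<dots> = (\<Sum>s\<in>P. Dd s) / C + c1 * ((\<Sum>s\<in>P. Vv s) / C) - 2 * \<gamma> k * ((\<Sum>s\<in>P. Gq s) / C)
      + (\<gamma> k)\<^sup>2 * ((\<Sum>s\<in>P. \<Sum>i<N. Wi i s) / (real N * C))"
    using C0 N0 by (simp add: field_simps)
  finally have fin: "expect_k N (k + 1) L \<le> expect_k N k Dd + c1 * expect_k N k Vv - 2 * \<gamma> k * expect_k N k Gq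
      + (\<gamma> k)\<^sup>2 * expect_k N (k + 1) (\<lambda>s. (norm (gb (s k) (x k s) - g2 xs))\<^sup>2)"
    unfolding Ek E4 .
  show ?thesis using fin unfolding N_def L_def Dd_def Vv_def Gq_def c1_def rmin_def by (simp add: mult.assoc)
qed

end
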